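(* Let $q\in\mathbb C$ with $|q|=1$ and $q^2\neq 1$, and let $A,B$ be self-adjoint operators on a Hilbert space $\mathcal H$. Suppose $\lambda,\lambda q\in\rho(A)$ and $\mu,\mu q\in\rho(B)$. (i) If $\mathcal D\subseteq\mathcal D(AB)\cap\mathcal D(BA)$ is a linear subspace with $ABf=qBAf$ for all $f\in\mathcal D$, then $\mathcal E:=(B-\mu qI)\mathcal D$ is a linear subspace of $\mathcal D(A)$ and $$R_\mu(B)Ag=qAR_{\mu q}(B)g\qquad(\dagger)$$ for all $g\in\mathcal E$ (in particular $R_{\mu q}(B)g\in\mathcal D(A)$). (ii) If $\mathcal E$ is a linear subspace of $\mathcal D(A)$ such that $R_{\mu q}(B)g\in\mathcal D(A)$ and $(\dagger)$ holds for all $g\in\mathcal E$, then every $f\in\mathcal D:=R_{\mu q}(B)\mathcal E$ lies in $\mathcal D(AB)\cap\mathcal D(BA)$ and satisfies $ABf=qBAf$. (iii) If $\mathcal E$ is a linear subspace of $\mathcal D(A)$ and $(\dagger)$ holds for all $g\in\mathcal E$, then $$R_\lambda(A)R_\mu(B)h=qR_{\mu q}(B)R_{\lambda q}(A)h+\mu\lambda q(q-1)R_\lambda(A)R_\mu(B)R_{\mu q}(B)R_{\lambda q}(A)h\qquad(\dagger\dagger)$$ for all $h\in\mathcal F:=(A-\lambda qI)\mathcal E$. (iv) If $(\dagger\dagger)$ holds for all $h$ in a linear subspace $\mathcal F\subseteq\mathcal H$, then $(\dagger)$ holds (with $R_{\mu q}(B)g\in\mathcal D(A)$) for all $g\in\mathcal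 E:=R_{\lambda q}(A)\mathcal F$.
   Context: For a densely defined closed operator $T$, $\mathcal D(T)$ denotes its domain, $\rho(T)$ its resolvent set and $R_\lambda(T)=(T-\lambda I)^{-1}$ its resolvent. Products of unbounded operators have their natural domains. *)

theory Defs
  imports Complex_Main
begin

text \<open>The HOL library has no complex inner product spaces, so we introduce
  them as type classes (no axioms are added to the logic; the class
  complex is shown below to be an instance, so the classes are inhabited).\<close>

class scaleC =
  fixes scaleC :: "complex \<Rightarrow> 'a \<Rightarrow> 'a" (infixr \<open>*\<^sub>C\<close> 75)

class complex_vector = scaleC + ab_group_add +
  assumes scaleC_add_right: "a *\<^sub>C (x + y) = a *\<^sub>C x + a *\<^sub>C y"
    and scaleC_add_left: "(a + b) *\<^sub>C x = a *\<^sub>C x + b *\<^sub>C x"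
    and scaleC_scaleC: "a *\<^sub>C (b *\<^sub>C x) = (a * b) *\<^sub>C x"
    and scaleC_one: "1 *\<^sub>C x = x"

class complex_inner = complex_vector +
  fixes cinner :: "'a \<Rightarrow> 'a \<Rightarrow> complex"
  assumes cinner_commute: "cinner x y = cnj (cinner y x)"
    and cinner_add_left: "cinner (x + y) z = cinner x z + cinner y z"
    and cinner_scaleC_left: "cinner (r *\<^sub>C x) y = cnj r * cinner x y"
    and cinner_ge_zero: "0 \<le> Re (cinner x x)"
    and cinner_eq_zero_iff: "cinner x x = 0 \<longleftrightarrow> x = 0"

definition cnorm :: "'a::complex_inner \<Rightarrow> real" where
  "cnorm x = sqrt (Re (cinner x x))"

text \<open>Hilbert space: complete with respect to the induced norm
  (the norm is written out, see cnorm).\<close>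
class chilbert_space = complex_inner +
  assumes norm_complete:
    "(\<forall>e>0. \<exists>N. \<forall>m\<ge>N. \<forall>n\<ge>N. sqrt (Re (cinner ((X::nat \<Rightarrow> 'a) m - X n) (X m - X n))) < e) \<Longrightarrow>
     \<exists>L. \<forall>e>0. \<exists>N. \<forall>n\<ge>N. sqrt (Re (cinner (X n - L) (X n - L))) < e"

instantiation complex :: chilbert_space
begin
definition scaleC_complex_def: "scaleC a (x::complex) = a * x"
definition cinner_complex_def: "cinner (x::complex) y = cnj x * y"
instance
proof
  fix X :: "nat \<Rightarrow> complex"
  assume a: "\<forall>e>0. \<exists>N. \<forall>m\<ge>N. \<forall>n\<ge>N. sqrt (Re (cinner (X m - X n) (X m - X n))) < e"
  have cn: "sqrt (Re (cinner z z)) = norm z" for z :: complex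
    by (simp add: cinner_complex_def complex_mod_sqrt_Re_mult_cnj mult.commute)
  from a have "Cauchy X" using cn by (simp add: Cauchy_def dist_norm)
  then have "convergent X" by (simp add: Cauchy_convergent_iff)
  then obtain L where "X \<longlonglongrightarrow> L" by (auto simp: convergent_def)
  then show "\<exists>L. \<forall>e>0. \<exists>N. \<forall>n\<ge>N. sqrt (Re (cinner (X n - L) (X n - L))) < e"
    using cn by (auto simp: LIMSEQ_iff)
qed (auto simp: scaleC_complex_def cinner_complex_def algebra_simps)
end

text \<open>An operator is given by its domain \<open>D\<close> and its action \<open>T\<close> (values of
  \<open>T\<close> outside \<open>D\<close> are irrelevant).\<close>

definition csubspace :: "'a::complex_vector set \<Rightarrow> bool" where
  "csubspace S \<longleftrightarrow> 0 \<in> S \<and> (\<forall>x\<in>S. \<forall>y\<in>S. x + y \<in> S) \<and> (\<forall>c. \<forall>x\<in>S. c *\<^sub>C x \<in> S)"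

definition linear_op :: "'a::complex_vector set \<Rightarrow> ('a \<Rightarrow> 'a) \<Rightarrow> bool" where
  "linear_op D T \<longleftrightarrow> csubspace D \<and>
     (\<forall>x\<in>D. \<forall>y\<in>D. T (x + y) = T x + T y) \<and> (\<forall>c. \<forall>x\<in>D. T (c *\<^sub>C x) = c *\<^sub>C T x)"

definition cdense :: "'a::chilbert_space set \<Rightarrow> bool" where
  "cdense S \<longleftrightarrow> (\<forall>x. \<forall>e>0. \<exists>y\<in>S. cnorm (x - y) < e)"

definition adjoint_dom :: "'a::chilbert_space set \<Rightarrow> ('a \<Rightarrow> 'a) \<Rightarrow> 'a set" where
  "adjoint_dom D T = {y. \<exists>z. \<forall>x\<in>D. cinner (T x) y = cinner x z}"

definition adjoint_op :: "'a::chilbert_space set \<Rightarrow> ('a \<Rightarrow> 'a) \<Rightarrow> 'a \<Rightarrow> 'a" where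
  "adjoint_op D T y = (THE z. \<forall>x\<in>D. cinner (T x) y = cinner x z)"

definition self_adjoint :: "'a::chilbert_space set \<Rightarrow> ('a \<Rightarrow> 'a) \<Rightarrow> bool" where
  "self_adjoint D T \<longleftrightarrow> linear_op D T \<and> cdense D \<and>
     adjoint_dom D T = D \<and> (\<forall>y\<in>D. adjoint_op D T y = T y)"

definition resolvent :: "'a::chilbert_space set \<Rightarrow> ('a \<Rightarrow> 'a) \<Rightarrow> complex \<Rightarrow> 'a \<Rightarrow> 'a" where
  "resolvent D T l = the_inv_into D (\<lambda>x. T x - l *\<^sub>C x)"

definition resolvent_set :: "'a::chilbert_space set \<Rightarrow> ('a \<Rightarrow> 'a) \<Rightarrow> complex set" where
  "resolvent_set D T = {l. bij_betw (\<lambda>x. T x - l *\<^sub>C x) D UNIV \<and>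
      (\<exists>C. \<forall>y. cnorm (resolvent D T l y) \<le> C * cnorm y)}"

definition prod_dom :: "'a set \<Rightarrow> 'a set \<Rightarrow> ('a \<Rightarrow> 'a) \<Rightarrow> 'a set" where
  "prod_dom DS DT T = {f \<in> DT. T f \<in> DS}"

end

theory Submission imports Defs begin

lemma module_scaleC: "module (scaleC :: complex \<Rightarrow> 'a::complex_vector \<Rightarrow> 'a)"
  by unfold_locales (auto simp: scaleC_add_right scaleC_add_left scaleC_scaleC scaleC_one)

lemmas sc_simps = module.scale_zero_left[OF module_scaleC] module.scale_minus_left[OF module_scaleC]
  module.scale_left_diff_distrib[OF module_scaleC] module.scale_zero_right[OF module_scaleC]
  module.scale_minus_right[OF module_scaleC] module.scale_right_diff_distrib[OF module_scaleC]
  scaleC_add_right scaleC_add_left scaleC_scaleC scaleC_one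

lemma cs_diff: "csubspace S \<Longrightarrow> x \<in> S \<Longrightarrow> y \<in> S \<Longrightarrow> x - y \<in> S"
proof -
  assume a: "csubspace S" "x \<in> S" "y \<in> S"
  have m: "(-1) *\<^sub>C y = - y" by (simp add: sc_simps)
  have "x + (-1) *\<^sub>C y \<in> S" using a unfolding csubspace_def by blast
  thus ?thesis using m by simp
qed

lemma cs_add: "csubspace S \<Longrightarrow> x \<in> S \<Longrightarrow> y \<in> S \<Longrightarrow> x + y \<in> S"
  unfolding csubspace_def by blast

lemma cs_scale: "csubspace S \<Longrightarrow> x \<in> S \<Longrightarrow> c *\<^sub>C x \<in> S"
  unfolding csubspace_def by blast

lemma lin_diff: "linear_op D T \<Longrightarrow> x \<in> D \<Longrightarrow> y \<in> D \<Longrightarrow> T (x - y) = T x - T y"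
proof -
  assume a: "linear_op D T" "x \<in> D" "y \<in> D"
  have m: "(-1) *\<^sub>C y = - y" "(-1) *\<^sub>C T y = - T y" by (simp_all add: sc_simps)
  have "(-1) *\<^sub>C y \<in> D" using a unfolding linear_op_def csubspace_def by blast
  hence my: "- y \<in> D" using m by simp
  have "T ((-1) *\<^sub>C y) = (-1) *\<^sub>C T y" using a unfolding linear_op_def by blast
  hence "T (- y) = - T y" using m by simp
  moreover have "T (x + - y) = T x + T (- y)" using a my unfolding linear_op_def by blast
  ultimately show ?thesis by (simp only: diff_conv_add_uminus)
qed

lemma lin_scale: "linear_op D T \<Longrightarrow> x \<in> D \<Longrightarrow> T (c *\<^sub>C x) = c *\<^sub>C T x"
  unfolding linear_op_def by blast
lemma lin_add: "linear_op D T \<Longrightarrow> x \<in> D \<Longrightarrow> y \<in> D \<Longrightarrow> T (x + y) = T x + T y"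
  unfolding linear_op_def by blast
lemma lin_cs: "linear_op D T \<Longrightarrow> csubspace D"
  unfolding linear_op_def by blast

locale res =
  fixes D :: "'a::chilbert_space set" and T :: "'a \<Rightarrow> 'a" and l :: complex
  assumes lin: "linear_op D T" and bij: "bij_betw (\<lambda>x. T x - l *\<^sub>C x) D UNIV"
begin
abbreviation "R \<equiv> resolvent D T l"

lemma inj: "inj_on (\<lambda>x. T x - l *\<^sub>C x) D" and img: "y \<in> (\<lambda>x. T x - l *\<^sub>C x) ` D"
  using bij unfolding bij_betw_def by auto
lemma R_in: "R y \<in> D"
  unfolding resolvent_def by (rule the_inv_into_into[OF inj img order_refl])
lemma R_eq: "T (R y) - l *\<^sub>C R y = y"
  unfolding resolvent_def using f_the_inv_into_f[OF inj img] .
lemma R_uniq: "x \<in> D \<Longrightarrow> T x - l *\<^sub>C x = y \<Longrightarrow> R y = x"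
  unfolding resolvent_def using the_inv_into_f_f[OF inj] by blast

lemma S_add: "x \<in> D \<Longrightarrow> y \<in> D \<Longrightarrow> T (x + y) - l *\<^sub>C (x + y) = (T x - l *\<^sub>C x) + (T y - l *\<^sub>C y)"
proof -
  assume a: "x \<in> D" "y \<in> D"
  have "T (x + y) = T x + T y" by (rule lin_add[OF lin a])
  moreover have "l *\<^sub>C (x + y) = l *\<^sub>C x + l *\<^sub>C y" by (rule scaleC_add_right)
  ultimately show ?thesis by (simp add: algebra_simps)
qed
lemma S_diff: "x \<in> D \<Longrightarrow> y \<in> D \<Longrightarrow> T (x - y) - l *\<^sub>C (x - y) = (T x - l *\<^sub>C x) - (T y - l *\<^sub>C y)"
proof -
  assume a: "x \<in> D" "y \<in> D"
  have "T (x - y) = T x - T y" by (rule lin_diff[OF lin a])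
  moreover have "l *\<^sub>C (x - y) = l *\<^sub>C x - l *\<^sub>C y" by (rule sc_simps(6))
  ultimately show ?thesis by (simp add: algebra_simps)
qed
lemma S_scale: "x \<in> D \<Longrightarrow> T (c *\<^sub>C x) - l *\<^sub>C (c *\<^sub>C x) = c *\<^sub>C (T x - l *\<^sub>C x)"
proof -
  assume a: "x \<in> D"
  have "T (c *\<^sub>C x) = c *\<^sub>C T x" by (rule lin_scale[OF lin a])
  moreover have "l *\<^sub>C (c *\<^sub>C x) = c *\<^sub>C (l *\<^sub>C x)" by (simp only: scaleC_scaleC mult.commute)
  moreover have "c *\<^sub>C (T x - l *\<^sub>C x) = c *\<^sub>C T x - c *\<^sub>C (l *\<^sub>C x)" by (rule sc_simps(6))
  ultimately show ?thesis by simp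
qed

lemma R_add: "R (x + y) = R x + R y"
  apply (rule R_uniq)
  using lin_cs[OF lin] R_in unfolding csubspace_def apply blast
  by (simp add: S_add R_in R_eq)
lemma R_diff: "R (x - y) = R x - R y"
  apply (rule R_uniq)
  using cs_diff[OF lin_cs[OF lin]] R_in apply blast
  by (simp add: S_diff R_in R_eq)
lemma R_scale: "R (c *\<^sub>C x) = c *\<^sub>C R x"
  apply (rule R_uniq)
  using cs_scale[OF lin_cs[OF lin]] R_in apply blast
  by (simp add: S_scale R_in R_eq)
end

lemma res_ident:
  assumes "res D T a" "res D T b"
  shows "resolvent D T a g - resolvent D T b g = (a - b) *\<^sub>C resolvent D T a (resolvent D T b g)"
proof -
  interpret A: res D T a by fact
  interpret B: res D T b by fact
  define u where "u = resolvent D T a g"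
  define v where "v = resolvent D T b g"
  have uD: "u \<in> D" and vD: "v \<in> D" unfolding u_def v_def by (rule A.R_in, rule B.R_in)
  have eu: "T u - a *\<^sub>C u = g" unfolding u_def by (rule A.R_eq)
  have ev: "T v - b *\<^sub>C v = g" unfolding v_def by (rule B.R_eq)
  have "T v - a *\<^sub>C v = (T v - b *\<^sub>C v) - (a *\<^sub>C v - b *\<^sub>C v)" by (simp add: algebra_simps)
  also have "\<dots> = g - (a - b) *\<^sub>C v" by (simp only: ev sc_simps(3))
  finally have e2: "T v - a *\<^sub>C v = g - (a - b) *\<^sub>C v" .
  have "T (u - v) - a *\<^sub>C (u - v) = (T u - a *\<^sub>C u) - (T v - a *\<^sub>C v)" by (rule A.S_diff[OF uD vD])
  also have "\<dots> = (a - b) *\<^sub>C v" by (simp only: eu e2 diff_diff_eq2 diff_add_cancel) (simp add: algebra_simps)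
  finally have "A.R ((a - b) *\<^sub>C v) = u - v" by (rule A.R_uniq[OF cs_diff[OF lin_cs[OF A.lin] uD vD]])
  thus ?thesis unfolding u_def v_def by (simp only: A.R_scale)
qed

theorem mainTheorem2:
  fixes q l m :: complex
    and DA DB :: "'a::chilbert_space set" and A B :: "'a \<Rightarrow> 'a"
  assumes q1: "cmod q = 1" and q2: "q\<^sup>2 \<noteq> 1"
    and sA: "self_adjoint DA A" and sB: "self_adjoint DB B"
    and rA: "l \<in> resolvent_set DA A" "l * q \<in> resolvent_set DA A"
    and rB: "m \<in> resolvent_set DB B" "m * q \<in> resolvent_set DB B"
  shows
    \<comment> \<open>(i)\<close>
    "(\<forall>D. csubspace D \<and> D \<subseteq> prod_dom DA DB B \<inter> prod_dom DB DA A \<and>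
          (\<forall>f\<in>D. A (B f) = q *\<^sub>C B (A f)) \<longrightarrow>
        csubspace ((\<lambda>f. B f - (m * q) *\<^sub>C f) ` D) \<and>
        (\<lambda>f. B f - (m * q) *\<^sub>C f) ` D \<subseteq> DA \<and>
        (\<forall>g\<in>(\<lambda>f. B f - (m * q) *\<^sub>C f) ` D.
            resolvent DB B (m * q) g \<in> DA \<and>
            resolvent DB B m (A g) = q *\<^sub>C A (resolvent DB B (m * q) g)))
    \<comment> \<open>(ii)\<close>
     \<and> (\<forall>E. csubspace E \<and> E \<subseteq> DA \<and>
          (\<forall>g\<in>E. resolvent DB B (m * q) g \<in> DA \<and>
             resolvent DB B m (A g) = q *\<^sub>C A (resolvent DB B (m * q) g)) \<longrightarrow>
        (\<forall>f\<in>resolvent DB B (m * q) ` E.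
            f \<in> prod_dom DA DB B \<inter> prod_dom DB DA A \<and> A (B f) = q *\<^sub>C B (A f)))
    \<comment> \<open>(iii)\<close>
     \<and> (\<forall>E. csubspace E \<and> E \<subseteq> DA \<and>
          (\<forall>g\<in>E. resolvent DB B (m * q) g \<in> DA \<and>
             resolvent DB B m (A g) = q *\<^sub>C A (resolvent DB B (m * q) g)) \<longrightarrow>
        (\<forall>h\<in>(\<lambda>g. A g - (l * q) *\<^sub>C g) ` E.
            resolvent DA A l (resolvent DB B m h) =
              q *\<^sub>C resolvent DB B (m * q) (resolvent DA A (l * q) h) +
              (m * l * q * (q - 1)) *\<^sub>C resolvent DA A l (resolvent DB B m
                 (resolvent DB B (m * q) (resolvent DA A (l * q) h)))))
    \<comment> \<open>(iv)\<close>
     \<and> (\<forall>F. csubspace F \<and>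
          (\<forall>h\<in>F. resolvent DA A l (resolvent DB B m h) =
              q *\<^sub>C resolvent DB B (m * q) (resolvent DA A (l * q) h) +
              (m * l * q * (q - 1)) *\<^sub>C resolvent DA A l (resolvent DB B m
                 (resolvent DB B (m * q) (resolvent DA A (l * q) h)))) \<longrightarrow>
        (\<forall>g\<in>resolvent DA A (l * q) ` F.
            resolvent DB B (m * q) g \<in> DA \<and>
            resolvent DB B m (A g) = q *\<^sub>C A (resolvent DB B (m * q) g)))"
proof -
  have linA: "linear_op DA A" using sA unfolding self_adjoint_def by (rule conjunct1)
  have linB: "linear_op DB B" using sB unfolding self_adjoint_def by (rule conjunct1)
  have csA: "csubspace DA" and csB: "csubspace DB" using lin_cs linA linB by auto
  have q0: "q \<noteq> 0" using q1 by (metis norm_zero zero_neq_one)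
  interpret RA1: res DA A l using linA rA(1) unfolding res_def resolvent_set_def by blast
  interpret RAq: res DA A "l * q" using linA rA(2) unfolding res_def resolvent_set_def by blast
  interpret RB1: res DB B m using linB rB(1) unfolding res_def resolvent_set_def by blast
  interpret RBq: res DB B "m * q" using linB rB(2) unfolding res_def resolvent_set_def by blast
  have rid: "resolvent DB B m g = (m - m * q) *\<^sub>C resolvent DB B m (resolvent DB B (m * q) g) + resolvent DB B (m * q) g" for g
    using res_ident[OF RB1.res_axioms RBq.res_axioms, of g] by (subst (asm) diff_eq_eq)
  define c where "c = m * l * q * (q - 1)"
  have P1: "(\<forall>D. csubspace D \<and> D \<subseteq> prod_dom DA DB B \<inter> prod_dom DB DA A \<and>
          (\<forall>f\<in>D. A (B f) = q *\<^sub>C B (A f)) \<longrightarrow>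
        csubspace ((\<lambda>f. B f - (m * q) *\<^sub>C f) ` D) \<and>
        (\<lambda>f. B f - (m * q) *\<^sub>C f) ` D \<subseteq> DA \<and>
        (\<forall>g\<in>(\<lambda>f. B f - (m * q) *\<^sub>C f) ` D.
            resolvent DB B (m * q) g \<in> DA \<and>
            resolvent DB B m (A g) = q *\<^sub>C A (resolvent DB B (m * q) g)))"
  proof (intro allI impI)
    fix D assume H: "csubspace D \<and> D \<subseteq> prod_dom DA DB B \<inter> prod_dom DB DA A \<and> (\<forall>f\<in>D. A (B f) = q *\<^sub>C B (A f))"
    hence csD: "csubspace D" and Dsub: "\<And>f. f\<in>D \<Longrightarrow> f \<in> DB \<and> B f \<in> DA \<and> f \<in> DA \<and> A f \<in> DB"
      and comm: "\<And>f. f\<in>D \<Longrightarrow> A (B f) = q *\<^sub>C B (A f)"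
      by (auto simp: prod_dom_def)
    let ?S = "\<lambda>f. B f - (m * q) *\<^sub>C f"
    have "csubspace (?S ` D)"
      unfolding csubspace_def
    proof (intro conjI ballI allI)
      have "(0::'a) \<in> DB" using csB unfolding csubspace_def by blast
      hence "?S (0 *\<^sub>C 0) = 0 *\<^sub>C ?S 0" by (rule RBq.S_scale)
      then have S0: "?S 0 = 0" by (simp add: sc_simps)
      have "(0::'a) \<in> D" using csD unfolding csubspace_def by blast
      hence "?S 0 \<in> ?S ` D" by (rule imageI)
      thus "0 \<in> ?S ` D" by (simp only: S0)
    next
      fix x y assume "x \<in> ?S ` D" "y \<in> ?S ` D"
      then obtain f1 f2 where f: "f1\<in>D" "f2\<in>D" "x = ?S f1" "y = ?S f2" by blast
      have "f1 + f2 \<in> D" using csD f unfolding csubspace_def by blast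
      hence "?S (f1 + f2) \<in> ?S ` D" by (rule imageI)
      moreover have "?S (f1 + f2) = x + y" using RBq.S_add[of f1 f2] Dsub f by simp
      ultimately show "x + y \<in> ?S ` D" by simp
    next
      fix c x assume "x \<in> ?S ` D"
      then obtain f where f: "f\<in>D" "x = ?S f" by blast
      have "c *\<^sub>C f \<in> D" using csD f unfolding csubspace_def by blast
      hence "?S (c *\<^sub>C f) \<in> ?S ` D" by (rule imageI)
      moreover have "?S (c *\<^sub>C f) = c *\<^sub>C x" using RBq.S_scale[of f c] Dsub f by simp
      ultimately show "c *\<^sub>C x \<in> ?S ` D" by simp
    qed
    moreover have "?S ` D \<subseteq> DA"
    proof
      fix x assume "x \<in> ?S ` D"
      then obtain f where f: "f\<in>D" "x = ?S f" by blast
      have "(m * q) *\<^sub>C f \<in> DA" using cs_scale[OF csA] Dsub f by blast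
      thus "x \<in> DA" using cs_diff[OF csA, of "B f" "(m * q) *\<^sub>C f"] Dsub f by simp
    qed
    moreover have "\<forall>g\<in>?S ` D. resolvent DB B (m * q) g \<in> DA \<and> resolvent DB B m (A g) = q *\<^sub>C A (resolvent DB B (m * q) g)"
    proof
      fix g assume "g \<in> ?S ` D" then obtain f where f: "f\<in>D" "g = ?S f" by blast
      have fB: "f \<in> DB" and BfA: "B f \<in> DA" and fA: "f \<in> DA" and AfB: "A f \<in> DB" using Dsub f by auto
      have e: "resolvent DB B (m * q) g = f" using RBq.R_uniq[OF fB] f by simp
      have "A g = A (B f) - A ((m * q) *\<^sub>C f)"
        using f lin_diff[OF linA BfA cs_scale[OF csA fA]] by simp
      also have "\<dots> = q *\<^sub>C B (A f) - (q * m) *\<^sub>C A f"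
        using lin_scale[OF linA fA] comm[OF f(1)] by (simp add: mult.commute)
      also have "\<dots> = q *\<^sub>C (B (A f) - m *\<^sub>C A f)"
        by (simp add: sc_simps)
      finally have Ag: "A g = q *\<^sub>C (B (A f) - m *\<^sub>C A f)" .
      have "resolvent DB B m (A g) = q *\<^sub>C A f"
        apply (rule RB1.R_uniq) apply (rule cs_scale[OF csB AfB])
        using RB1.S_scale[OF AfB] Ag by simp
      then show "resolvent DB B (m * q) g \<in> DA \<and> resolvent DB B m (A g) = q *\<^sub>C A (resolvent DB B (m * q) g)"
        using e fA by simp
    qed
    ultimately show "csubspace (?S ` D) \<and> ?S ` D \<subseteq> DA \<and> (\<forall>g\<in>?S ` D. resolvent DB B (m * q) g \<in> DA \<and> resolvent DB B m (A g) = q *\<^sub>C A (resolvent DB B (m * q) g))"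
      by blast
  qed
  have P2: "(\<forall>E. csubspace E \<and> E \<subseteq> DA \<and>
          (\<forall>g\<in>E. resolvent DB B (m * q) g \<in> DA \<and>
             resolvent DB B m (A g) = q *\<^sub>C A (resolvent DB B (m * q) g)) \<longrightarrow>
        (\<forall>f\<in>resolvent DB B (m * q) ` E.
            f \<in> prod_dom DA DB B \<inter> prod_dom DB DA A \<and> A (B f) = q *\<^sub>C B (A f)))"
  proof (intro allI impI ballI)
    fix E f assume H: "csubspace E \<and> E \<subseteq> DA \<and> (\<forall>g\<in>E. resolvent DB B (m * q) g \<in> DA \<and>
             resolvent DB B m (A g) = q *\<^sub>C A (resolvent DB B (m * q) g))"
      and "f \<in> resolvent DB B (m * q) ` E"
    then obtain g where g: "g\<in>E" "f = resolvent DB B (m * q) g" by blast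
    have gA: "g \<in> DA" and fA: "f \<in> DA" and com: "resolvent DB B m (A g) = q *\<^sub>C A f"
      using H g by auto
    have fB: "f \<in> DB" using g RBq.R_in by simp
    have Bf: "B f = g + (m * q) *\<^sub>C f" using RBq.R_eq[of g] g by (simp add: algebra_simps)
    have BfA: "B f \<in> DA" using Bf gA fA cs_add[OF csA] cs_scale[OF csA] by metis
    have Af: "A f = inverse q *\<^sub>C resolvent DB B m (A g)" using com q0 by (simp add: sc_simps)
    have AfB: "A f \<in> DB" using Af RB1.R_in cs_scale[OF csB] by metis
    have "B (resolvent DB B m (A g)) - m *\<^sub>C resolvent DB B m (A g) = A g" by (rule RB1.R_eq)
    hence "q *\<^sub>C (B (A f) - m *\<^sub>C A f) = A g" using com RB1.S_scale[OF AfB, of q] by simp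
    hence BA: "q *\<^sub>C B (A f) = A g + (q * m) *\<^sub>C A f" by (simp add: sc_simps algebra_simps)
    have "A (B f) = A g + A ((m * q) *\<^sub>C f)" using Bf lin_add[OF linA gA cs_scale[OF csA fA]] by simp
    hence "A (B f) = A g + (m * q) *\<^sub>C A f" using lin_scale[OF linA fA] by simp
    then show "f \<in> prod_dom DA DB B \<inter> prod_dom DB DA A \<and> A (B f) = q *\<^sub>C B (A f)"
      using BA fA fB BfA AfB by (simp add: prod_dom_def mult.commute)
  qed
  have P3: "(\<forall>E. csubspace E \<and> E \<subseteq> DA \<and>
          (\<forall>g\<in>E. resolvent DB B (m * q) g \<in> DA \<and>
             resolvent DB B m (A g) = q *\<^sub>C A (resolvent DB B (m * q) g)) \<longrightarrow>
        (\<forall>h\<in>(\<lambda>g. A g - (l * q) *\<^sub>C g) ` E.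
            resolvent DA A l (resolvent DB B m h) =
              q *\<^sub>C resolvent DB B (m * q) (resolvent DA A (l * q) h) +
              (m * l * q * (q - 1)) *\<^sub>C resolvent DA A l (resolvent DB B m
                 (resolvent DB B (m * q) (resolvent DA A (l * q) h)))))"
  proof (intro allI impI ballI)
    fix E h assume H: "csubspace E \<and> E \<subseteq> DA \<and> (\<forall>g\<in>E. resolvent DB B (m * q) g \<in> DA \<and>
             resolvent DB B m (A g) = q *\<^sub>C A (resolvent DB B (m * q) g))"
      and "h \<in> (\<lambda>g. A g - (l * q) *\<^sub>C g) ` E"
    then obtain g where g: "g\<in>E" "h = A g - (l * q) *\<^sub>C g" by blast
    define f where "f = resolvent DB B (m * q) g"
    have gA: "g \<in> DA" and fA: "f \<in> DA" and com: "resolvent DB B m (A g) = q *\<^sub>C A f"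
      using H g f_def by auto
    have hg: "resolvent DA A (l * q) h = g" using RAq.R_uniq gA g by simp
    have e1: "resolvent DB B m h = q *\<^sub>C A f - (l * q) *\<^sub>C resolvent DB B m g"
      using g com RB1.R_diff RB1.R_scale by simp
    have e2: "resolvent DB B m h = q *\<^sub>C (A f - l *\<^sub>C f) + c *\<^sub>C resolvent DB B m f"
      unfolding e1 rid[of g] f_def[symmetric] c_def by (simp add: sc_simps algebra_simps)
    have e3: "resolvent DA A l (q *\<^sub>C (A f - l *\<^sub>C f)) = q *\<^sub>C f"
      using RA1.R_scale RA1.R_uniq fA by simp
    show "resolvent DA A l (resolvent DB B m h) =
              q *\<^sub>C resolvent DB B (m * q) (resolvent DA A (l * q) h) +
              (m * l * q * (q - 1)) *\<^sub>C resolvent DA A l (resolvent DB B m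
                 (resolvent DB B (m * q) (resolvent DA A (l * q) h)))"
      unfolding hg f_def[symmetric] e2 using RA1.R_add RA1.R_scale e3 c_def by simp
  qed
  have P4: "(\<forall>F. csubspace F \<and>
          (\<forall>h\<in>F. resolvent DA A l (resolvent DB B m h) =
              q *\<^sub>C resolvent DB B (m * q) (resolvent DA A (l * q) h) +
              (m * l * q * (q - 1)) *\<^sub>C resolvent DA A l (resolvent DB B m
                 (resolvent DB B (m * q) (resolvent DA A (l * q) h)))) \<longrightarrow>
        (\<forall>g\<in>resolvent DA A (l * q) ` F.
            resolvent DB B (m * q) g \<in> DA \<and>
            resolvent DB B m (A g) = q *\<^sub>C A (resolvent DB B (m * q) g)))"
  proof (intro allI impI ballI)
    fix F g assume H: "csubspace F \<and>
          (\<forall>h\<in>F. resolvent DA A l (resolvent DB B m h) =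
              q *\<^sub>C resolvent DB B (m * q) (resolvent DA A (l * q) h) +
              (m * l * q * (q - 1)) *\<^sub>C resolvent DA A l (resolvent DB B m
                 (resolvent DB B (m * q) (resolvent DA A (l * q) h))))"
      and "g \<in> resolvent DA A (l * q) ` F"
    then obtain h where h: "h\<in>F" "g = resolvent DA A (l * q) h" by blast
    define f where "f = resolvent DB B (m * q) g"
    have hyp: "resolvent DA A l (resolvent DB B m h) = q *\<^sub>C f + c *\<^sub>C resolvent DA A l (resolvent DB B m f)"
      using H h f_def c_def by auto
    define y where "y = resolvent DB B m h - c *\<^sub>C resolvent DB B m f"
    have ry: "resolvent DA A l y = q *\<^sub>C f" unfolding y_def using RA1.R_diff RA1.R_scale hyp by simp
    have qfA: "q *\<^sub>C f \<in> DA" using ry RA1.R_in by metis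
    have "f = inverse q *\<^sub>C (q *\<^sub>C f)" using q0 by (simp add: sc_simps)
    hence fA: "f \<in> DA" using qfA cs_scale[OF csA] by metis
    have "A (q *\<^sub>C f) - l *\<^sub>C (q *\<^sub>C f) = y" using RA1.R_eq[of y] ry by simp
    hence Ay: "y = q *\<^sub>C (A f - l *\<^sub>C f)" using RA1.S_scale[OF fA, of q] by simp
    have Ag: "A g = h + (l * q) *\<^sub>C g" using RAq.R_eq[of h] h by (simp add: algebra_simps)
    have "resolvent DB B m (A g) = resolvent DB B m h + (l * q) *\<^sub>C resolvent DB B m g"
      using Ag RB1.R_add RB1.R_scale by simp
    also have "\<dots> = y + c *\<^sub>C resolvent DB B m f + (l * q) *\<^sub>C ((m - m * q) *\<^sub>C resolvent DB B m f + f)"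
      using y_def rid[of g] f_def by simp
    also have "\<dots> = q *\<^sub>C A f" unfolding Ay c_def by (simp add: sc_simps algebra_simps)
    finally show "resolvent DB B (m * q) g \<in> DA \<and> resolvent DB B m (A g) = q *\<^sub>C A (resolvent DB B (m * q) g)"
      using fA f_def by simp
  qed
  show ?thesis by (rule conjI[OF P1 conjI[OF P2 conjI[OF P3 P4]]])
qed

end
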